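(* Suppose Assumption A holds and Assumption B holds with $p=3$. Let $\{(x^k,m^k)\}_{k\ge0}$ be generated by Algorithm 1 with $q=2$, step sizes $\{\eta_k\}_{k\ge0}$, and parameters satisfying, for all $k\ge0$, $\theta_{k,1}/\gamma_{k,1}+\theta_{k,2}/\gamma_{k,2}=1$, $\theta_{k,1}/\gamma_{k,1}^2+\theta_{k,2}/\gamma_{k,2}^2=1$ and $\theta_{k,1}+\theta_{k,2}\in(0,1)$. Let $\{p_k\}_{k\ge0}$ be a positive sequence with \[ (1-\theta_{k,1}-\theta_{k,2})p_{k+1}\le\big(1-(\theta_{k,1}+\theta_{k,2})/2\big)p_k\qquad\forall k\ge0, \] and define $P_k=f(x^k)+p_k\|m^k-\nabla f(x^k)\|^2$. Then for all $k\ge0$, \[ \mathbb{E}_{\xi^{k+1}}[P_{k+1}]\le P_k-\eta_k\|\nabla f(x^k)\|+\frac{L_1}{2}\eta_k^2+\frac{2\eta_k^2}{(\theta_{k,1}+\theta_{k,2})p_k}+\frac{L_3^2\eta_k^6\theta_{k,1}^2p_{k+1}}{12\gamma_{k,1}^6(\theta_{k,1}+\theta_{k,2})}+\frac{L_3^2\eta_k^6\theta_{k,2}^2p_{k+1}}{12\gamma_{k,2}^6(\theta_{k,1}+\theta_{k,2})}+\frac{L_3^2\eta_k^6p_{k+1}}{12(\theta_{k,1}+\theta_{k,2})}+2(\theta_{k,1}^2+\theta_{k,2}^2)p_{k+1}\sigma^2 . \]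
   Context: Problem: minimize $f:\mathbb{R}^n\to\mathbb{R}$, where only a stochastic gradient estimator $G(\cdot;\xi)$ is accessible, $\xi$ being a random variable with sample space $\Xi$. $\|\cdot\|$ is the Euclidean norm. Assumption A: (a) there is a finite $f_{\mathrm{low}}$ with $f(x)\ge f_{\mathrm{low}}$ for all $x$; (b) there is $L_1>0$ with $\|\nabla f(y)-\nabla f(x)\|\le L_1\|y-x\|$ for all $x,y$; (c) $\mathbb{E}_\xi[G(x;\xi)]=\nabla f(x)$ and $\mathbb{E}_\xi[\|G(x;\xi)-\nabla f(x)\|^2]\le\sigma^2$ for all $x$, for some $\sigma>0$. Assumption B: $f$ is $p$ times continuously differentiable for some $p\ge2$ and there is $L_p>0$ with $\|D^pf(y)-D^pf(x)\|_{(p)}\le L_p\|y-x\|$ for all $x,y$, where $D^pf(x)$ is the $p$th derivative as a symmetric $p$-linear form and $\|\mathcal{T}\|_{(p)}=\max\{\mathcal{T}[h_1,\dots,h_p]:\|h_i\|\le 1\}$. Algorithm 1 (SFOM with multi-extrapolated momentum): inputs $x^0\in\mathbb{R}^n$, step sizes $\eta_k>0$, an integer $q\ge1$, extrapolation parameters $\gamma_{k,t}\in(0,1)$ and weighting parameters $\theta_{k,t}\in\mathbb{R}$ ($1\le t\le q$, $k\ge0$) with $\sum_{t=1}^q\theta_{k,t}\in(0,1)$ for all $k\ge0$. Initialize $x^{-1}=x^0$, $m^{-1}=0$, $(\gamma_{-1,t},\theta_{-1,t})=(1,1/q)$ for all $t$. For $k=0,1,2,\dots$: $z^{k,t}=x^k+\frac{1-\gamma_{k-1,t}}{\gamma_{k-1,t}}(x^k-x^{k-1})$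 for $1\le t\le q$; $m^k=(1-\sum_{t=1}^q\theta_{k-1,t})m^{k-1}+\sum_{t=1}^q\theta_{k-1,t}G(z^{k,t};\xi^k)$; $x^{k+1}=x^k-\eta_k m^k/\|m^k\|$. Here $\xi^0,\xi^1,\dots$ are independent samples of $\xi$ (and $m^k\neq0$ is implicitly assumed). $\mathbb{E}_{\xi^{k+1}}[\cdot]$ denotes expectation with respect to $\xi^{k+1}$ conditional on $\xi^0,\dots,\xi^k$. *)

theory Defs
  imports "HOL-Probability.Probability"
begin

definition tnorm3 :: "('a::real_normed_vector \<Rightarrow> 'a \<Rightarrow> 'a \<Rightarrow> real) \<Rightarrow> real" where
  "tnorm3 T = Sup {T h1 h2 h3 | h1 h2 h3. norm h1 \<le> 1 \<and> norm h2 \<le> 1 \<and> norm h3 \<le> 1}"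

text \<open>Parameters with index k-1, using the initialization (gamma_{-1,t}, theta_{-1,t}) = (1, 1/q).\<close>
definition gprev :: "(nat \<Rightarrow> nat \<Rightarrow> real) \<Rightarrow> nat \<Rightarrow> nat \<Rightarrow> real" where
  "gprev gam k t = (if k = 0 then 1 else gam (k - 1) t)"

definition thprev :: "nat \<Rightarrow> (nat \<Rightarrow> nat \<Rightarrow> real) \<Rightarrow> nat \<Rightarrow> nat \<Rightarrow> real" where
  "thprev q th k t = (if k = 0 then 1 / real q else th (k - 1) t)"

text \<open>State of Algorithm 1 before iteration k: (x^{k-1}, x^k, m^{k-1}),
  initialized as (x^0, x^0, 0). The sample path is xi :: nat => 's, xi k = xi^k.\<close>
fun sfom_state ::
  "('a::real_normed_vector \<Rightarrow> 's \<Rightarrow> 'a) \<Rightarrow> 'a \<Rightarrow> (nat \<Rightarrow> real) \<Rightarrow> nat \<Rightarrow>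
   (nat \<Rightarrow> nat \<Rightarrow> real) \<Rightarrow> (nat \<Rightarrow> nat \<Rightarrow> real) \<Rightarrow> (nat \<Rightarrow> 's) \<Rightarrow> nat \<Rightarrow> 'a \<times> 'a \<times> 'a" where
  "sfom_state G x0 eta q gam th xi 0 = (x0, x0, 0)"
| "sfom_state G x0 eta q gam th xi (Suc k) =
     (let (xp, x, mp) = sfom_state G x0 eta q gam th xi k;
          z = (\<lambda>t. x + ((1 - gprev gam k t) / gprev gam k t) *\<^sub>R (x - xp));
          m = (1 - (\<Sum>t=1..q. thprev q th k t)) *\<^sub>R mp
              + (\<Sum>t=1..q. thprev q th k t *\<^sub>R G (z t) (xi k))
      in (x, x - (eta k / norm m) *\<^sub>R m, m))"

definition sfom_x where
  "sfom_x G x0 eta q gam th xi k = fst (snd (sfom_state G x0 eta q gam th xi k))"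

definition sfom_m where
  "sfom_m G x0 eta q gam th xi k = snd (snd (sfom_state G x0 eta q gam th xi (Suc k)))"

end

theory Submission
  imports Defs
begin


lemma taylor3_upper:
  fixes g g1 g2 :: "real \<Rightarrow> real" and K :: real
  assumes d1: "\<And>t. (g has_real_derivative g1 t) (at t)"
    and d2: "\<And>t. (g1 has_real_derivative g2 t) (at t)"
    and b: "\<And>t. 0 \<le> t \<Longrightarrow> t \<le> 1 \<Longrightarrow> g2 t - g2 0 \<le> K * t"
  shows "g 1 - g 0 - g1 0 - g2 0 / 2 \<le> K / 6"
proof -
  define \<psi> where "\<psi> t = g1 t - g1 0 - t * g2 0 - K * t\<^sup>2 / 2" for t
  have psi: "\<psi> t \<le> 0" if "0 \<le> t" "t \<le> 1" for t
  proof -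
    have "\<psi> t \<le> \<psi> 0"
    proof (rule DERIV_nonpos_imp_nonincreasing[OF that(1)])
      fix x assume x: "0 \<le> x" "x \<le> t"
      have "DERIV \<psi> x :> g2 x - g2 0 - K * x"
        unfolding \<psi>_def[abs_def]
        by (auto intro!: derivative_eq_intros d2)
      moreover have "g2 x - g2 0 - K * x \<le> 0" using b[of x] x that by auto
      ultimately show "\<exists>y. DERIV \<psi> x :> y \<and> y \<le> 0" by blast
    qed
    also have "\<psi> 0 = 0" by (simp add: \<psi>_def)
    finally show ?thesis .
  qed
  define \<phi> where "\<phi> t = g t - g 0 - t * g1 0 - t\<^sup>2 / 2 * g2 0 - K * t ^ 3 / 6" for t
  have "\<phi> 1 \<le> \<phi> 0"
  proof (rule DERIV_nonpos_imp_nonincreasing[of 0 1])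
    fix x :: real assume x: "0 \<le> x" "x \<le> 1"
    have "DERIV \<phi> x :> \<psi> x"
      unfolding \<phi>_def[abs_def] \<psi>_def
      by (auto intro!: derivative_eq_intros d1 simp: power2_eq_square)
    then show "\<exists>y. DERIV \<phi> x :> y \<and> y \<le> 0" using psi[OF x] by blast
  qed simp
  then show ?thesis by (simp add: \<phi>_def)
qed

lemma taylor3_abs:
  fixes g g1 g2 :: "real \<Rightarrow> real" and K :: real
  assumes d1: "\<And>t. (g has_real_derivative g1 t) (at t)"
    and d2: "\<And>t. (g1 has_real_derivative g2 t) (at t)"
    and b: "\<And>t. 0 \<le> t \<Longrightarrow> t \<le> 1 \<Longrightarrow> \<bar>g2 t - g2 0\<bar> \<le> K * t"
  shows "\<bar>g 1 - g 0 - g1 0 - g2 0 / 2\<bar> \<le> K / 6"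
proof -
  have u: "g 1 - g 0 - g1 0 - g2 0 / 2 \<le> K / 6"
    by (rule taylor3_upper[OF d1 d2]) (use b in fastforce)
  have "(- g) 1 - (- g) 0 - (- g1) 0 - (- g2) 0 / 2 \<le> K / 6"
    by (rule taylor3_upper[of "-g" "-g1" "-g2"])
       (auto intro!: derivative_eq_intros d1 d2 dest!: b simp: fun_Compl_def)
  then show ?thesis using u unfolding abs_le_iff by (simp add: fun_Compl_def)
qed


lemma chain_dir:
  fixes F :: "'a::real_normed_vector \<Rightarrow> real"
  assumes d: "\<And>y. (F has_derivative (\<lambda>h. F' y h)) (at y)"
  shows "((\<lambda>t. F (x + t *\<^sub>R w)) has_real_derivative F' (x + t *\<^sub>R w) w) (at t)"
proof -
  have l: "((\<lambda>t. x + t *\<^sub>R w) has_derivative (\<lambda>s. s *\<^sub>R w)) (at t)"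
    by (auto intro!: derivative_eq_intros)
  have c: "((\<lambda>t. F (x + t *\<^sub>R w)) has_derivative (\<lambda>s. F' (x + t *\<^sub>R w) (s *\<^sub>R w))) (at t)"
    using has_derivative_compose[OF l d[of "x + t *\<^sub>R w"]] by (simp add: o_def)
  have bl: "bounded_linear (F' (x + t *\<^sub>R w))"
    using d[of "x + t *\<^sub>R w"] has_derivative_bounded_linear by (metis eta_contract_eq)
  have "(\<lambda>s. F' (x + t *\<^sub>R w) (s *\<^sub>R w)) = (*) (F' (x + t *\<^sub>R w) w)"
    using bl by (intro ext) (simp add: linear_simps mult.commute)
  then show ?thesis using c by (simp add: has_field_derivative_def)
qed

lemma smooth_upper:
  fixes f :: "'a::real_inner \<Rightarrow> real"
  assumes grad: "\<forall>x. (f has_derivative (\<lambda>h. gradf x \<bullet> h)) (at x)"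
    and lip: "\<forall>x y. norm (gradf y - gradf x) \<le> L * norm (y - x)"
  shows "f (x + w) \<le> f x + gradf x \<bullet> w + L / 2 * (norm w)\<^sup>2"
proof -
  define \<phi> where "\<phi> t = f (x + t *\<^sub>R w) - t * (gradf x \<bullet> w) - L / 2 * t\<^sup>2 * (norm w)\<^sup>2" for t
  have "\<phi> 1 \<le> \<phi> 0"
  proof (rule DERIV_nonpos_imp_nonincreasing[of 0 1])
    fix t :: real assume t: "0 \<le> t" "t \<le> 1"
    have d: "DERIV \<phi> t :> gradf (x + t *\<^sub>R w) \<bullet> w - gradf x \<bullet> w - L * t * (norm w)\<^sup>2"
      unfolding \<phi>_def[abs_def]
      by (rule derivative_eq_intros chain_dir[where F'="\<lambda>y h. gradf y \<bullet> h"] refl grad[rule_format])+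
         (simp add: power2_eq_square algebra_simps)
    have "gradf (x + t *\<^sub>R w) \<bullet> w - gradf x \<bullet> w = (gradf (x + t *\<^sub>R w) - gradf x) \<bullet> w"
      by (simp add: inner_diff_left)
    also have "\<dots> \<le> norm (gradf (x + t *\<^sub>R w) - gradf x) * norm w"
      by (rule norm_cauchy_schwarz)
    also have "\<dots> \<le> L * norm (t *\<^sub>R w) * norm w"
      using lip[rule_format, of x "x + t *\<^sub>R w"] by (intro mult_right_mono) (auto simp: norm_minus_commute)
    also have "\<dots> = L * t * (norm w)\<^sup>2" using t by (simp add: power2_eq_square)
    finally show "\<exists>y. DERIV \<phi> t :> y \<and> y \<le> 0" using d by (intro exI[of _ _]) auto
  qed simp
  then show ?thesis by (simp add: \<phi>_def)
qed
lemma lin_via_unique: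
  fixes \<Phi> :: "'b::real_vector \<Rightarrow> 'a::real_normed_vector \<Rightarrow> real"
  assumes d: "\<And>a. (\<Phi> a has_derivative (\<lambda>h. \<Psi> a h)) (at x)"
    and l: "\<And>y. linear (\<lambda>a. \<Phi> a y)"
  shows "linear (\<lambda>a. \<Psi> a h)"
proof (rule linearI)
  fix a b
  have e: "\<Phi> (a + b) = (\<lambda>y. \<Phi> a y + \<Phi> b y)"
    using l[THEN linear_add] by (intro ext) simp
  have "(\<Phi> (a + b) has_derivative (\<lambda>h. \<Psi> a h + \<Psi> b h)) (at x)"
    unfolding e by (intro has_derivative_add d)
  from has_derivative_unique[OF d[of "a + b"] this]
  show "\<Psi> (a + b) h = \<Psi> a h + \<Psi> b h" by metis
next
  fix c :: real and a
  have e: "\<Phi> (c *\<^sub>R a) = (\<lambda>y. c * \<Phi> a y)"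
    using l[THEN linear_scale] by (intro ext) simp
  have "(\<Phi> (c *\<^sub>R a) has_derivative (\<lambda>h. c * \<Psi> a h)) (at x)"
    unfolding e by (intro has_derivative_mult_right d)
  from has_derivative_unique[OF d[of "c *\<^sub>R a"] this]
  show "\<Psi> (c *\<^sub>R a) h = c *\<^sub>R \<Psi> a h" by (metis real_scaleR_def)
qed

lemma lin_bound:
  fixes g :: "'a::euclidean_space \<Rightarrow> real"
  assumes "linear g"
  shows "\<bar>g h\<bar> \<le> norm h * (\<Sum>b\<in>Basis. \<bar>g b\<bar>)"
proof -
  have "g h = g (\<Sum>b\<in>Basis. (h \<bullet> b) *\<^sub>R b)" by (simp add: euclidean_representation)
  also have "\<dots> = (\<Sum>b\<in>Basis. (h \<bullet> b) * g b)"
    using assms by (simp add: linear_sum linear_scale)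
  finally have "\<bar>g h\<bar> \<le> (\<Sum>b\<in>Basis. \<bar>h \<bullet> b\<bar> * \<bar>g b\<bar>)"
    by (simp add: abs_mult[symmetric] sum_abs)
  also have "\<dots> \<le> (\<Sum>b\<in>Basis. norm h * \<bar>g b\<bar>)"
    by (intro sum_mono mult_right_mono Basis_le_norm) auto
  finally show ?thesis by (simp add: sum_distrib_left)
qed

lemma tri_bound:
  fixes T :: "'a::euclidean_space \<Rightarrow> 'a \<Rightarrow> 'a \<Rightarrow> real"
  assumes l1: "\<And>y z. linear (\<lambda>a. T a y z)" and l2: "\<And>y z. linear (\<lambda>a. T y a z)"
    and l3: "\<And>y z. linear (\<lambda>a. T y z a)"
  shows "\<exists>C. \<forall>h1 h2 h3. norm h1 \<le> 1 \<longrightarrow> norm h2 \<le> 1 \<longrightarrow> norm h3 \<le> 1 \<longrightarrow> \<bar>T h1 h2 h3\<bar> \<le> C"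
proof (intro exI allI impI)
  fix h1 h2 h3 :: 'a assume n: "norm h1 \<le> 1" "norm h2 \<le> 1" "norm h3 \<le> 1"
  have "\<bar>T h1 h2 h3\<bar> \<le> norm h1 * (\<Sum>i\<in>Basis. \<bar>T i h2 h3\<bar>)" by (rule lin_bound[OF l1])
  also have "\<dots> \<le> 1 * (\<Sum>i\<in>Basis. \<bar>T i h2 h3\<bar>)"
    using n by (intro mult_right_mono) (auto intro: sum_nonneg)
  also have "\<dots> \<le> (\<Sum>i\<in>Basis. \<Sum>j\<in>Basis. \<Sum>l\<in>Basis. \<bar>T i j l\<bar>)"
  proof -
    have "\<bar>T i h2 h3\<bar> \<le> (\<Sum>j\<in>Basis. \<Sum>l\<in>Basis. \<bar>T i j l\<bar>)" for i
    proof -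
      have "\<bar>T i h2 h3\<bar> \<le> norm h2 * (\<Sum>j\<in>Basis. \<bar>T i j h3\<bar>)" by (rule lin_bound[OF l2])
      also have "\<dots> \<le> 1 * (\<Sum>j\<in>Basis. \<bar>T i j h3\<bar>)"
        using n by (intro mult_right_mono) (auto intro: sum_nonneg)
      also have "\<dots> \<le> (\<Sum>j\<in>Basis. \<Sum>l\<in>Basis. \<bar>T i j l\<bar>)"
      proof -
        have "\<bar>T i j h3\<bar> \<le> (\<Sum>l\<in>Basis. \<bar>T i j l\<bar>)" for j
        proof -
          have "\<bar>T i j h3\<bar> \<le> norm h3 * (\<Sum>l\<in>Basis. \<bar>T i j l\<bar>)" by (rule lin_bound[OF l3])
          also have "\<dots> \<le> 1 * (\<Sum>l\<in>Basis. \<bar>T i j l\<bar>)"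
            using n by (intro mult_right_mono) (auto intro: sum_nonneg)
          finally show ?thesis by simp
        qed
        then show ?thesis by (simp add: sum_mono)
      qed
      finally show ?thesis .
    qed
    then show ?thesis by (simp add: sum_mono)
  qed
  finally show "\<bar>T h1 h2 h3\<bar> \<le> (\<Sum>i\<in>Basis. \<Sum>j\<in>Basis. \<Sum>l\<in>Basis. \<bar>T i j l\<bar>)" .
qed

lemma tnorm3_upper:
  fixes T :: "'a::euclidean_space \<Rightarrow> 'a \<Rightarrow> 'a \<Rightarrow> real"
  assumes l1: "\<And>y z. linear (\<lambda>a. T a y z)" and l2: "\<And>y z. linear (\<lambda>a. T y a z)"
    and l3: "\<And>y z. linear (\<lambda>a. T y z a)"
    and n: "norm h1 \<le> 1" "norm h2 \<le> 1" "norm h3 \<le> 1"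
  shows "T h1 h2 h3 \<le> tnorm3 T"
proof -
  obtain C where C: "\<forall>h1 h2 h3. norm h1 \<le> 1 \<longrightarrow> norm h2 \<le> 1 \<longrightarrow> norm h3 \<le> 1 \<longrightarrow> \<bar>T h1 h2 h3\<bar> \<le> C"
    using tri_bound[OF l1 l2 l3] by blast
  have "bdd_above {T h1 h2 h3 | h1 h2 h3. norm h1 \<le> 1 \<and> norm h2 \<le> 1 \<and> norm h3 \<le> 1}"
    using C by (auto intro!: bdd_aboveI[of _ C] dest: abs_le_D1)
  then show ?thesis unfolding tnorm3_def
    by (intro cSup_upper) (use n in blast)+
qed



lemma sq3: "(u + v + w)\<^sup>2 \<le> 3 * (u\<^sup>2 + v\<^sup>2 + w\<^sup>2)" for u v w :: real
proof -
  have e: "3 * (u\<^sup>2 + v\<^sup>2 + w\<^sup>2) - (u + v + w)\<^sup>2 = (u - v)\<^sup>2 + (v - w)\<^sup>2 + (u - w)\<^sup>2"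
    by (simp add: power2_eq_square algebra_simps)
  have "0 \<le> (u - v)\<^sup>2 + (v - w)\<^sup>2 + (u - w)\<^sup>2" by simp
  with e show ?thesis by linarith
qed

context
  fixes gradf :: "'a::euclidean_space \<Rightarrow> 'a"
    and D2 :: "'a \<Rightarrow> 'a \<Rightarrow> 'a \<Rightarrow> real" and D3 :: "'a \<Rightarrow> 'a \<Rightarrow> 'a \<Rightarrow> 'a \<Rightarrow> real"
    and L3 :: real
  assumes D2: "\<forall>x h1. ((\<lambda>y. gradf y \<bullet> h1) has_derivative (\<lambda>h. D2 x h1 h)) (at x)"
    and D3: "\<forall>x h1 h2. ((\<lambda>y. D2 y h1 h2) has_derivative (\<lambda>h. D3 x h1 h2 h)) (at x)"
    and B_lip: "\<forall>x y. tnorm3 (\<lambda>h1 h2 h3. D3 y h1 h2 h3 - D3 x h1 h2 h3) \<le> L3 * norm (y - x)"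
begin

lemma D2_lin2: "linear (\<lambda>a. D2 x h a)"
  using D2 has_derivative_bounded_linear bounded_linear.linear by blast

lemma D2_lin1: "linear (\<lambda>a. D2 x a h)"
  by (rule lin_via_unique[where \<Phi>="\<lambda>a y. gradf y \<bullet> a"])
     (use D2 in \<open>auto intro: bounded_linear.linear[OF bounded_linear_inner_right]\<close>)

lemma D3_lin3: "linear (\<lambda>a. D3 x h1 h2 a)"
  using D3 has_derivative_bounded_linear bounded_linear.linear by blast

lemma D3_lin1: "linear (\<lambda>a. D3 x a h2 h)"
  by (rule lin_via_unique[where \<Phi>="\<lambda>a y. D2 y a h2"]) (use D3 D2_lin1 in auto)

lemma D3_lin2: "linear (\<lambda>a. D3 x h1 a h)"
  by (rule lin_via_unique[where \<Phi>="\<lambda>a y. D2 y h1 a"]) (use D3 D2_lin2 in auto)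

lemma D3_diff_bound:
  assumes h: "norm h \<le> 1"
  shows "D3 y h w w - D3 x h w w \<le> L3 * norm (y - x) * (norm w)\<^sup>2"
proof (cases "w = 0")
  case True
  then show ?thesis using D3_lin3[of x h 0] D3_lin3[of y h 0] by (simp add: linear_0)
next
  case False
  define u where "u = w /\<^sub>R norm w"
  have nu: "norm u \<le> 1" using False by (simp add: u_def)
  have wu: "w = norm w *\<^sub>R u" using False by (simp add: u_def)
  have sc: "D3 z h w w = (norm w)\<^sup>2 * D3 z h u u" for z
  proof -
    have "D3 z h w w = D3 z h (norm w *\<^sub>R u) (norm w *\<^sub>R u)" using wu by simp
    also have "\<dots> = norm w * D3 z h u (norm w *\<^sub>R u)"
      using linear_scale[OF D3_lin2[of z h "norm w *\<^sub>R u"], of "norm w" u] by simp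
    also have "\<dots> = norm w * (norm w * D3 z h u u)"
      using linear_scale[OF D3_lin3[of z h u], of "norm w" u] by simp
    finally show ?thesis by (simp add: power2_eq_square)
  qed
  have "D3 y h u u - D3 x h u u \<le> tnorm3 (\<lambda>h1 h2 h3. D3 y h1 h2 h3 - D3 x h1 h2 h3)"
    by (rule tnorm3_upper[where T="\<lambda>h1 h2 h3. D3 y h1 h2 h3 - D3 x h1 h2 h3"])
       (auto intro!: linear_compose_sub D3_lin1 D3_lin2 D3_lin3 simp: h nu)
  also have "\<dots> \<le> L3 * norm (y - x)" using B_lip by blast
  finally have "(norm w)\<^sup>2 * (D3 y h u u - D3 x h u u) \<le> (norm w)\<^sup>2 * (L3 * norm (y - x))"
    by (intro mult_left_mono) auto
  then show ?thesis by (simp add: sc algebra_simps)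
qed

lemma grad_taylor:
  assumes h: "norm h \<le> 1"
  shows "\<bar>gradf (y + w) \<bullet> h - gradf y \<bullet> h - D2 y h w - D3 y h w w / 2\<bar> \<le> L3 * (norm w) ^ 3 / 6"
proof -
  have "\<bar>(\<lambda>t. gradf (y + t *\<^sub>R w) \<bullet> h) 1 - (\<lambda>t. gradf (y + t *\<^sub>R w) \<bullet> h) 0
        - (\<lambda>t. D2 (y + t *\<^sub>R w) h w) 0 - (\<lambda>t. D3 (y + t *\<^sub>R w) h w w) 0 / 2\<bar>
        \<le> (L3 * (norm w) ^ 3) / 6"
  proof (rule taylor3_abs)
    show "((\<lambda>t. gradf (y + t *\<^sub>R w) \<bullet> h) has_real_derivative D2 (y + t *\<^sub>R w) h w) (at t)" for t
      by (rule chain_dir[where F'="\<lambda>z v. D2 z h v"]) (use D2 in blast)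
    show "((\<lambda>t. D2 (y + t *\<^sub>R w) h w) has_real_derivative D3 (y + t *\<^sub>R w) h w w) (at t)" for t
      by (rule chain_dir[where F'="\<lambda>z v. D3 z h w v"]) (use D3 in blast)
    fix t :: real assume t: "0 \<le> t" "t \<le> 1"
    have a: "D3 (y + t *\<^sub>R w) h w w - D3 y h w w \<le> L3 * norm (t *\<^sub>R w) * (norm w)\<^sup>2"
      using D3_diff_bound[OF h, of "y + t *\<^sub>R w" w y] by simp
    have b: "D3 y h w w - D3 (y + t *\<^sub>R w) h w w \<le> L3 * norm (t *\<^sub>R w) * (norm w)\<^sup>2"
      using D3_diff_bound[OF h, of y w "y + t *\<^sub>R w"] by (simp add: norm_minus_commute)
    have eq: "L3 * norm (t *\<^sub>R w) * (norm w)\<^sup>2 = L3 * norm w ^ 3 * t"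
      using t by (simp add: power2_eq_square power3_eq_cube)
    have y0: "y + 0 *\<^sub>R w = y" by simp
    show "\<bar>D3 (y + t *\<^sub>R w) h w w - D3 (y + 0 *\<^sub>R w) h w w\<bar> \<le> L3 * norm w ^ 3 * t"
      unfolding y0 abs_le_iff using a b eq by linarith
  qed
  then show ?thesis by simp
qed

lemma B_bound:
  fixes x xp :: 'a and th1 th2 g1 g2 :: real
  assumes g1: "0 < g1" "g1 < 1" and g2: "0 < g2" "g2 < 1"
    and s: "0 < th1 + th2" "th1 + th2 < 1"
    and c1: "th1 / g1 + th2 / g2 = 1" and c2: "th1 / g1\<^sup>2 + th2 / g2\<^sup>2 = 1"
    and L3: "L3 > 0"
  shows "(norm (th1 *\<^sub>R gradf (xp + ((1 - g1) / g1) *\<^sub>R (xp - x))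
             + th2 *\<^sub>R gradf (xp + ((1 - g2) / g2) *\<^sub>R (xp - x))
             + (1 - (th1 + th2)) *\<^sub>R gradf x - gradf xp))\<^sup>2
         \<le> L3\<^sup>2 * norm (xp - x) ^ 6 / 12 * (th1\<^sup>2 / g1 ^ 6 + th2\<^sup>2 / g2 ^ 6 + 1)"
    (is "(norm ?B)\<^sup>2 \<le> ?R")
proof (cases "?B = 0")
  case True
  then show ?thesis using L3 by (simp add: g1 g2 add_nonneg_nonneg)
next
  case False
  define d where "d = xp - x"
  define a1 where "a1 = (1 - g1) / g1"
  define a2 where "a2 = (1 - g2) / g2"
  define s where "s = th1 + th2"
  define h where "h = ?B /\<^sub>R norm ?B"
  have nh: "norm h \<le> 1" using False by (simp add: h_def)
  have Bh: "?B \<bullet> h = norm ?B" using False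
    by (simp add: h_def inner_commute power2_norm_eq_inner[symmetric] power2_eq_square)
  define g0 where "g0 = gradf xp \<bullet> h"
  define A where "A = D2 xp h d"
  define Q where "Q = D3 xp h d d"
  define r where "r c = gradf (xp + c *\<^sub>R d) \<bullet> h - g0 - c * A - c\<^sup>2 * Q / 2" for c
  have rb: "\<bar>r c\<bar> \<le> L3 * \<bar>c\<bar> ^ 3 * norm d ^ 3 / 6" for c
  proof -
    have l2: "D2 xp h (c *\<^sub>R d) = c * A"
      using linear_scale[OF D2_lin2[of xp h], of c d] by (simp add: A_def)
    have l3: "D3 xp h (c *\<^sub>R d) (c *\<^sub>R d) = c\<^sup>2 * Q"
      using linear_scale[OF D3_lin2[of xp h "c *\<^sub>R d"], of c d]
            linear_scale[OF D3_lin3[of xp h d], of c d]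
      by (simp add: Q_def power2_eq_square)
    have "\<bar>r c\<bar> \<le> L3 * norm (c *\<^sub>R d) ^ 3 / 6"
      using grad_taylor[OF nh, of xp "c *\<^sub>R d"] by (simp add: r_def l2 l3 g0_def)
    then show ?thesis by (simp add: power_mult_distrib)
  qed
  have e1: "gradf (xp + a1 *\<^sub>R d) \<bullet> h = g0 + a1 * A + a1\<^sup>2 * Q / 2 + r a1" by (simp add: r_def)
  have e2: "gradf (xp + a2 *\<^sub>R d) \<bullet> h = g0 + a2 * A + a2\<^sup>2 * Q / 2 + r a2" by (simp add: r_def)
  have e0: "gradf x \<bullet> h = g0 - A + Q / 2 + r (-1)" by (simp add: r_def d_def)
  have a1e: "a1 = 1 / g1 - 1" using g1 by (simp add: a1_def diff_divide_distrib)
  have a2e: "a2 = 1 / g2 - 1" using g2 by (simp add: a2_def diff_divide_distrib)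
  have k1: "th1 * a1 + th2 * a2 = 1 - s"
  proof -
    have "th1 * a1 + th2 * a2 = (th1 / g1 + th2 / g2) - s"
      unfolding a1e a2e s_def by (simp add: algebra_simps)
    then show ?thesis using c1 by simp
  qed
  have k2: "th1 * a1\<^sup>2 + th2 * a2\<^sup>2 = s - 1"
  proof -
    have "th1 * a1\<^sup>2 + th2 * a2\<^sup>2 = (th1 / g1\<^sup>2 + th2 / g2\<^sup>2) - 2 * (th1 / g1 + th2 / g2) + s"
      unfolding a1e a2e s_def by (simp add: algebra_simps power2_eq_square)
    then show ?thesis using c1 c2 by simp
  qed
  have "norm ?B = ?B \<bullet> h" using Bh by simp
  also have "\<dots> = th1 * (gradf (xp + a1 *\<^sub>R d) \<bullet> h) + th2 * (gradf (xp + a2 *\<^sub>R d) \<bullet> h)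
       + (1 - s) * (gradf x \<bullet> h) - g0"
    by (simp add: inner_add_left inner_diff_left a1_def a2_def d_def s_def g0_def)
  also have "\<dots> = th1 * r a1 + th2 * r a2 + (1 - s) * r (-1)
      + (th1 * a1 + th2 * a2 - (1 - s)) * A + (th1 * a1\<^sup>2 + th2 * a2\<^sup>2 + (1 - s)) * Q / 2"
    unfolding e1 e2 e0 s_def by (simp add: field_simps)
  also have "\<dots> = th1 * r a1 + th2 * r a2 + (1 - s) * r (-1)" using k1 k2 by simp
  also have "\<dots> \<le> \<bar>th1\<bar> * \<bar>r a1\<bar> + \<bar>th2\<bar> * \<bar>r a2\<bar> + (1 - s) * \<bar>r (-1)\<bar>"
  proof -
    have "th1 * r a1 \<le> \<bar>th1\<bar> * \<bar>r a1\<bar>" by (metis abs_ge_self abs_mult)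
    moreover have "th2 * r a2 \<le> \<bar>th2\<bar> * \<bar>r a2\<bar>" by (metis abs_ge_self abs_mult)
    moreover have "(1 - s) * r (-1) \<le> (1 - s) * \<bar>r (-1)\<bar>"
      using s unfolding s_def by (intro mult_left_mono) auto
    ultimately show ?thesis by linarith
  qed
  finally have nb: "norm ?B \<le> \<bar>th1\<bar> * \<bar>r a1\<bar> + \<bar>th2\<bar> * \<bar>r a2\<bar> + (1 - s) * \<bar>r (-1)\<bar>" .
  define K where "K = L3 * norm d ^ 3 / 6"
  have K0: "K \<ge> 0" using L3 by (simp add: K_def)
  have a1p: "0 \<le> a1" "a1 \<le> 1 / g1" using g1 by (auto simp: a1_def field_simps)
  have a2p: "0 \<le> a2" "a2 \<le> 1 / g2" using g2 by (auto simp: a2_def field_simps)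
  have r1: "\<bar>r a1\<bar> \<le> K * a1 ^ 3" using rb[of a1] a1p by (simp add: K_def algebra_simps)
  have r2: "\<bar>r a2\<bar> \<le> K * a2 ^ 3" using rb[of a2] a2p by (simp add: K_def algebra_simps)
  have r0: "\<bar>r (-1)\<bar> \<le> K" using rb[of "-1"] by (simp add: K_def)
  have "norm ?B \<le> \<bar>th1\<bar> * (K * a1 ^ 3) + \<bar>th2\<bar> * (K * a2 ^ 3) + (1 - s) * K"
  proof -
    have "\<bar>th1\<bar> * \<bar>r a1\<bar> \<le> \<bar>th1\<bar> * (K * a1 ^ 3)" using r1 by (intro mult_left_mono) auto
    moreover have "\<bar>th2\<bar> * \<bar>r a2\<bar> \<le> \<bar>th2\<bar> * (K * a2 ^ 3)" using r2 by (intro mult_left_mono) auto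
    moreover have "(1 - s) * \<bar>r (-1)\<bar> \<le> (1 - s) * K"
      using r0 s unfolding s_def by (intro mult_left_mono) auto
    ultimately show ?thesis using nb by linarith
  qed
  then have "(norm ?B)\<^sup>2 \<le> (\<bar>th1\<bar> * (K * a1 ^ 3) + \<bar>th2\<bar> * (K * a2 ^ 3) + (1 - s) * K)\<^sup>2"
    by (intro power_mono) auto
  also have "\<dots> \<le> 3 * ((\<bar>th1\<bar> * (K * a1 ^ 3))\<^sup>2 + (\<bar>th2\<bar> * (K * a2 ^ 3))\<^sup>2 + ((1 - s) * K)\<^sup>2)"
    by (rule sq3)
  also have "\<dots> = 3 * K\<^sup>2 * (th1\<^sup>2 * a1 ^ 6 + th2\<^sup>2 * a2 ^ 6 + (1 - s)\<^sup>2)"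
  proof -
    have "(K - K * s)\<^sup>2 = K\<^sup>2 * (1 - s)\<^sup>2" by (simp add: power2_eq_square algebra_simps)
    then show ?thesis by (simp add: power_mult_distrib algebra_simps power2_abs flip: power_mult)
  qed
  also have "\<dots> \<le> 3 * K\<^sup>2 * (th1\<^sup>2 / g1 ^ 6 + th2\<^sup>2 / g2 ^ 6 + 1)"
  proof -
    have "a1 ^ 6 \<le> (1 / g1) ^ 6" using a1p by (intro power_mono) auto
    then have t1: "th1\<^sup>2 * a1 ^ 6 \<le> th1\<^sup>2 / g1 ^ 6"
      by (metis mult_left_mono zero_le_power2 power_one_over times_divide_eq_right mult.right_neutral)
    have "a2 ^ 6 \<le> (1 / g2) ^ 6" using a2p by (intro power_mono) auto
    then have t2: "th2\<^sup>2 * a2 ^ 6 \<le> th2\<^sup>2 / g2 ^ 6"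
      by (metis mult_left_mono zero_le_power2 power_one_over times_divide_eq_right mult.right_neutral)
    have t3: "(1 - s)\<^sup>2 \<le> 1" using s unfolding s_def by (simp add: power2_eq_square mult_le_one)
    show ?thesis using t1 t2 t3 by (intro mult_left_mono) auto
  qed
  also have "\<dots> = ?R" by (simp add: K_def d_def power2_eq_square algebra_simps)
  finally show ?thesis .
qed

end


lemma (in prob_space) expect_bound:
  fixes c v1 v2 :: "'v::euclidean_space" and G1 G2 :: "'a \<Rightarrow> 'v" and th1 th2 \<sigma> :: real
  assumes m1: "G1 \<in> borel_measurable M" and m2: "G2 \<in> borel_measurable M"
    and i1: "integrable M G1" and i2: "integrable M G2"
    and e1: "integral\<^sup>L M G1 = v1" and e2: "integral\<^sup>L M G2 = v2"
    and vi1: "integrable M (\<lambda>s. (norm (G1 s - v1))\<^sup>2)"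
    and vi2: "integrable M (\<lambda>s. (norm (G2 s - v2))\<^sup>2)"
    and v1: "integral\<^sup>L M (\<lambda>s. (norm (G1 s - v1))\<^sup>2) \<le> \<sigma>\<^sup>2"
    and v2: "integral\<^sup>L M (\<lambda>s. (norm (G2 s - v2))\<^sup>2) \<le> \<sigma>\<^sup>2"
  shows "integrable M (\<lambda>\<xi>. (norm (c + th1 *\<^sub>R (G1 \<xi> - v1) + th2 *\<^sub>R (G2 \<xi> - v2)))\<^sup>2)
     \<and> integral\<^sup>L M (\<lambda>\<xi>. (norm (c + th1 *\<^sub>R (G1 \<xi> - v1) + th2 *\<^sub>R (G2 \<xi> - v2)))\<^sup>2)
       \<le> (norm c)\<^sup>2 + 2 * (th1\<^sup>2 + th2\<^sup>2) * \<sigma>\<^sup>2"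
proof -
  define N where "N \<xi> = th1 *\<^sub>R (G1 \<xi> - v1) + th2 *\<^sub>R (G2 \<xi> - v2)" for \<xi>
  define F where "F \<xi> = 2 * th1\<^sup>2 * (norm (G1 \<xi> - v1))\<^sup>2 + 2 * th2\<^sup>2 * (norm (G2 \<xi> - v2))\<^sup>2" for \<xi>
  have iN: "integrable M N" unfolding N_def using i1 i2 by auto
  have eN: "integral\<^sup>L M N = 0"
    unfolding N_def using i1 i2 e1 e2 by (simp add: prob_space)
  have iF: "integrable M F" unfolding F_def using vi1 vi2 by auto
  have eF: "integral\<^sup>L M F \<le> 2 * (th1\<^sup>2 + th2\<^sup>2) * \<sigma>\<^sup>2"
  proof -
    have "integral\<^sup>L M F = 2 * th1\<^sup>2 * integral\<^sup>L M (\<lambda>s. (norm (G1 s - v1))\<^sup>2)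
        + 2 * th2\<^sup>2 * integral\<^sup>L M (\<lambda>s. (norm (G2 s - v2))\<^sup>2)"
      unfolding F_def using vi1 vi2 by simp
    also have "\<dots> \<le> 2 * th1\<^sup>2 * \<sigma>\<^sup>2 + 2 * th2\<^sup>2 * \<sigma>\<^sup>2"
      using v1 v2 by (intro add_mono mult_left_mono) auto
    finally show ?thesis by (simp add: algebra_simps)
  qed
  have NF: "(norm (N \<xi>))\<^sup>2 \<le> F \<xi>" for \<xi>
  proof -
    have "norm (N \<xi>) \<le> \<bar>th1\<bar> * norm (G1 \<xi> - v1) + \<bar>th2\<bar> * norm (G2 \<xi> - v2)"
      unfolding N_def by (rule order_trans[OF norm_triangle_ineq]) simp
    then have "(norm (N \<xi>))\<^sup>2 \<le> (\<bar>th1\<bar> * norm (G1 \<xi> - v1) + \<bar>th2\<bar> * norm (G2 \<xi> - v2))\<^sup>2"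
      by (intro power_mono) auto
    also have "\<dots> \<le> F \<xi>"
    proof -
      define a where "a = \<bar>th1\<bar> * norm (G1 \<xi> - v1)"
      define b where "b = \<bar>th2\<bar> * norm (G2 \<xi> - v2)"
      have "(a + b)\<^sup>2 \<le> 2 * a\<^sup>2 + 2 * b\<^sup>2"
      proof -
        have "0 \<le> (a - b)\<^sup>2" by simp
        then show ?thesis by (simp add: power2_eq_square algebra_simps)
      qed
      then show ?thesis unfolding a_def b_def F_def by (simp add: power_mult_distrib power2_abs)
    qed
    finally show ?thesis .
  qed
  have mN: "N \<in> borel_measurable M" unfolding N_def using m1 m2 by measurable
  have iNN: "integrable M (\<lambda>\<xi>. (norm (N \<xi>))\<^sup>2)"
  proof (rule Bochner_Integration.integrable_bound[OF iF])
    show "(\<lambda>\<xi>. (norm (N \<xi>))\<^sup>2) \<in> borel_measurable M" using mN by measurable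
    show "AE x in M. norm ((norm (N x))\<^sup>2) \<le> norm (F x)"
      using NF by (auto intro!: AE_I2 order_trans[OF _ abs_ge_self])
  qed
  have sq: "(norm (c + N \<xi>))\<^sup>2 = (norm c)\<^sup>2 + 2 * (c \<bullet> N \<xi>) + (norm (N \<xi>))\<^sup>2" for \<xi>
    by (simp add: power2_norm_eq_inner inner_add_left inner_add_right inner_commute)
  have cN: "integrable M (\<lambda>\<xi>. c \<bullet> N \<xi>)" using iN by auto
  have I: "integrable M (\<lambda>\<xi>. (norm (c + N \<xi>))\<^sup>2)"
    unfolding sq using cN iNN by auto
  have "integral\<^sup>L M (\<lambda>\<xi>. (norm (c + N \<xi>))\<^sup>2) = (norm c)\<^sup>2 + 2 * (c \<bullet> integral\<^sup>L M N) + integral\<^sup>L M (\<lambda>\<xi>. (norm (N \<xi>))\<^sup>2)"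
    unfolding sq using cN iNN iN by (simp add: prob_space)
  also have "\<dots> \<le> (norm c)\<^sup>2 + 2 * (th1\<^sup>2 + th2\<^sup>2) * \<sigma>\<^sup>2"
    using eN eF integral_mono[OF iNN iF NF] by simp
  finally show ?thesis using I by (simp add: N_def add.assoc)
qed


lemma sfom_dep:
  "(\<forall>i<j. xi i = xi' i) \<Longrightarrow> sfom_state G x0 eta q gam th xi j = sfom_state G x0 eta q gam th xi' j"
proof (induction j)
  case 0 then show ?case by simp
next
  case (Suc j)
  then have "sfom_state G x0 eta q gam th xi j = sfom_state G x0 eta q gam th xi' j" by auto
  moreover have "xi j = xi' j" using Suc.prems by auto
  ultimately show ?case by (simp add: Let_def split: prod.splits)
qed

lemma sfom_shape:
  "sfom_state G x0 eta q gam th xi (Suc k) =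
     (sfom_x G x0 eta q gam th xi k, sfom_x G x0 eta q gam th xi (Suc k), sfom_m G x0 eta q gam th xi k)"
  unfolding sfom_x_def sfom_m_def
  by (simp add: Let_def split: prod.splits)

lemma sfom_x_Suc:
  "sfom_x G x0 eta q gam th xi (Suc k) = sfom_x G x0 eta q gam th xi k
     - (eta k / norm (sfom_m G x0 eta q gam th xi k)) *\<^sub>R sfom_m G x0 eta q gam th xi k"
proof -
  obtain xp x mp where s: "sfom_state G x0 eta q gam th xi k = (xp, x, mp)" by (metis prod_cases3)
  show ?thesis unfolding sfom_x_def sfom_m_def using s by (simp add: Let_def)
qed

lemma sum12: "(\<Sum>t=1..2::nat. f t) = f 1 + f 2"
  by (simp add: numeral_2_eq_2)

lemma sum12': "sum f {Suc 0..2::nat} = f (Suc 0) + f 2"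
  by (simp add: numeral_2_eq_2)

lemma sfom_m_Suc:
  "sfom_m G x0 eta 2 gam th xi (Suc k) =
     (1 - (th k 1 + th k 2)) *\<^sub>R sfom_m G x0 eta 2 gam th xi k
     + th k 1 *\<^sub>R G (sfom_x G x0 eta 2 gam th xi (Suc k) + ((1 - gam k 1) / gam k 1) *\<^sub>R
            (sfom_x G x0 eta 2 gam th xi (Suc k) - sfom_x G x0 eta 2 gam th xi k)) (xi (Suc k))
     + th k 2 *\<^sub>R G (sfom_x G x0 eta 2 gam th xi (Suc k) + ((1 - gam k 2) / gam k 2) *\<^sub>R
            (sfom_x G x0 eta 2 gam th xi (Suc k) - sfom_x G x0 eta 2 gam th xi k)) (xi (Suc k))"
proof -
  have s: "sfom_state G x0 eta 2 gam th xi (Suc k) =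
     (sfom_x G x0 eta 2 gam th xi k, sfom_x G x0 eta 2 gam th xi (Suc k), sfom_m G x0 eta 2 gam th xi k)"
    by (rule sfom_shape)
  show ?thesis
    apply (subst sfom_m_def)
    apply (subst sfom_state.simps(2))
    unfolding s by (simp add: Let_def sum12 sum12' gprev_def thprev_def add.assoc)
qed



lemma S1:
  fixes a b s :: real
  assumes "0 < s" "s < 1" "0 \<le> a" "0 \<le> b"
  shows "((1 - s) * a + b)\<^sup>2 \<le> (1 - s) * a\<^sup>2 + b\<^sup>2 / s"
proof -
  have "(1 - s) * a\<^sup>2 + b\<^sup>2 / s - ((1 - s) * a + b)\<^sup>2 = (1 - s) * (s * a - b)\<^sup>2 / s"
    using assms by (simp add: field_simps power2_eq_square)
  moreover have "0 \<le> (1 - s) * (s * a - b)\<^sup>2 / s" using assms by simp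
  ultimately show ?thesis by linarith
qed


lemma S2:
  fixes g m :: "'a::real_inner"
  assumes "m \<noteq> 0"
  shows "- (g \<bullet> m) / norm m \<le> - norm g + 2 * norm (m - g)"
proof -
  have nm: "norm m > 0" using assms by simp
  have c: "(m - g) \<bullet> m \<le> norm (m - g) * norm m" by (rule norm_cauchy_schwarz)
  have e: "g \<bullet> m = (norm m)\<^sup>2 - (m - g) \<bullet> m" by (simp add: inner_diff_left power2_norm_eq_inner)
  have "(norm m - norm (m - g)) * norm m \<le> g \<bullet> m"
    using c e by (simp add: power2_eq_square left_diff_distrib)
  then have "norm m - norm (m - g) \<le> (g \<bullet> m) / norm m"
    using nm by (simp add: pos_le_divide_eq)
  moreover have "norm g \<le> norm m + norm (m - g)"
    using norm_triangle_ineq4[of m "m - g"] by simp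
  ultimately show ?thesis by simp
qed


lemma S3:
  fixes \<eta> e s p :: real
  assumes "0 < s" "0 < p"
  shows "2 * \<eta> * e \<le> s / 2 * p * e\<^sup>2 + 2 * \<eta>\<^sup>2 / (s * p)"
proof -
  have "s / 2 * p * e\<^sup>2 + 2 * \<eta>\<^sup>2 / (s * p) - 2 * \<eta> * e = (s * p * e - 2 * \<eta>)\<^sup>2 / (2 * s * p)"
    using assms by (simp add: field_simps power2_eq_square)
  moreover have "0 \<le> (s * p * e - 2 * \<eta>)\<^sup>2 / (2 * s * p)" using assms by simp
  ultimately show ?thesis by linarith
qed


theorem theorem3p3:
  fixes M :: "'s measure"
    and f :: "'a::euclidean_space \<Rightarrow> real" and gradf :: "'a \<Rightarrow> 'a"
    and D2 :: "'a \<Rightarrow> 'a \<Rightarrow> 'a \<Rightarrow> real" and D3 :: "'a \<Rightarrow> 'a \<Rightarrow> 'a \<Rightarrow> 'a \<Rightarrow> real"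
    and G :: "'a \<Rightarrow> 's \<Rightarrow> 'a"
    and flow L1 L3 \<sigma> :: real
    and x0 :: 'a and eta :: "nat \<Rightarrow> real" and gam th :: "nat \<Rightarrow> nat \<Rightarrow> real"
    and p :: "nat \<Rightarrow> real" and xi :: "nat \<Rightarrow> 's" and k :: nat
  assumes M: "prob_space M"
    \<comment> \<open>Assumption A\<close>
    and A_low: "\<forall>x. f x \<ge> flow"
    and grad: "\<forall>x. (f has_derivative (\<lambda>h. gradf x \<bullet> h)) (at x)"
    and L1: "L1 > 0" and A_lip: "\<forall>x y. norm (gradf y - gradf x) \<le> L1 * norm (y - x)"
    and G_meas: "\<forall>x. G x \<in> borel_measurable M"
    and G_int: "\<forall>x. integrable M (G x)"
    and G_unb: "\<forall>x. integral\<^sup>L M (G x) = gradf x"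
    and G_var_int: "\<forall>x. integrable M (\<lambda>s. (norm (G x s - gradf x))\<^sup>2)"
    and G_var: "\<forall>x. integral\<^sup>L M (\<lambda>s. (norm (G x s - gradf x))\<^sup>2) \<le> \<sigma>\<^sup>2"
    and sigma: "\<sigma> > 0"
    \<comment> \<open>Assumption B with p = 3\<close>
    and D2: "\<forall>x h1. ((\<lambda>y. gradf y \<bullet> h1) has_derivative (\<lambda>h. D2 x h1 h)) (at x)"
    and D3: "\<forall>x h1 h2. ((\<lambda>y. D2 y h1 h2) has_derivative (\<lambda>h. D3 x h1 h2 h)) (at x)"
    and D3_cont: "\<forall>h1 h2 h3. continuous_on UNIV (\<lambda>x. D3 x h1 h2 h3)"
    and L3: "L3 > 0"
    and B_lip: "\<forall>x y. tnorm3 (\<lambda>h1 h2 h3. D3 y h1 h2 h3 - D3 x h1 h2 h3) \<le> L3 * norm (y - x)"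
    \<comment> \<open>Algorithm 1 parameters, q = 2\<close>
    and eta_pos: "\<forall>j. eta j > 0"
    and gam_range: "\<forall>j t. t \<in> {1..2} \<longrightarrow> gam j t \<in> {0<..<1}"
    and th_sum: "\<forall>j. th j 1 + th j 2 \<in> {0<..<1}"
    and cond1: "\<forall>j. th j 1 / gam j 1 + th j 2 / gam j 2 = 1"
    and cond2: "\<forall>j. th j 1 / (gam j 1)\<^sup>2 + th j 2 / (gam j 2)\<^sup>2 = 1"
    and p_pos: "\<forall>j. p j > 0"
    and p_rec: "\<forall>j. (1 - th j 1 - th j 2) * p (Suc j) \<le> (1 - (th j 1 + th j 2) / 2) * p j"
    \<comment> \<open>realized samples xi^0, xi^1, ... and nonvanishing m^j up to step k\<close>
    and xi_sp: "\<forall>j. xi j \<in> space M"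
    and m_nz: "\<forall>j\<le>k. sfom_m G x0 eta 2 gam th xi j \<noteq> 0"
  shows
    "let X = sfom_x G x0 eta 2 gam th; Mm = sfom_m G x0 eta 2 gam th;
         P = (\<lambda>path j. f (X path j) + p j * (norm (Mm path j - gradf (X path j)))\<^sup>2);
         s = th k 1 + th k 2
     in integrable M (\<lambda>\<xi>. P (xi(Suc k := \<xi>)) (Suc k)) \<and>
        integral\<^sup>L M (\<lambda>\<xi>. P (xi(Suc k := \<xi>)) (Suc k))
        \<le> P xi k - eta k * norm (gradf (X xi k)) + L1 / 2 * (eta k)\<^sup>2
           + 2 * (eta k)\<^sup>2 / (s * p k)
           + L3\<^sup>2 * eta k ^ 6 * (th k 1)\<^sup>2 * p (Suc k) / (12 * gam k 1 ^ 6 * s)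
           + L3\<^sup>2 * eta k ^ 6 * (th k 2)\<^sup>2 * p (Suc k) / (12 * gam k 2 ^ 6 * s)
           + L3\<^sup>2 * eta k ^ 6 * p (Suc k) / (12 * s)
           + 2 * ((th k 1)\<^sup>2 + (th k 2)\<^sup>2) * p (Suc k) * \<sigma>\<^sup>2"
proof -
  interpret prob_space M by (rule M)
  define X where "X = sfom_x G x0 eta 2 gam th"
  define Mm where "Mm = sfom_m G x0 eta 2 gam th"
  define s where "s = th k 1 + th k 2"
  define xk where "xk = X xi k"
  define xk1 where "xk1 = X xi (Suc k)"
  define mk where "mk = Mm xi k"
  define a1 where "a1 = (1 - gam k 1) / gam k 1"
  define a2 where "a2 = (1 - gam k 2) / gam k 2"
  define z1 where "z1 = xk1 + a1 *\<^sub>R (xk1 - xk)"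
  define z2 where "z2 = xk1 + a2 *\<^sub>R (xk1 - xk)"
  define B where "B = th k 1 *\<^sub>R gradf z1 + th k 2 *\<^sub>R gradf z2 + (1 - s) *\<^sub>R gradf xk - gradf xk1"
  define c where "c = (1 - s) *\<^sub>R (mk - gradf xk) + B"
  define Q where "Q \<xi> = (norm (c + th k 1 *\<^sub>R (G z1 \<xi> - gradf z1) + th k 2 *\<^sub>R (G z2 \<xi> - gradf z2)))\<^sup>2" for \<xi>
  have Pxi: "f (X (xi(Suc k := \<xi>)) (Suc k)) + p (Suc k) * (norm (Mm (xi(Suc k := \<xi>)) (Suc k) - gradf (X (xi(Suc k := \<xi>)) (Suc k))))\<^sup>2
      = f xk1 + p (Suc k) * Q \<xi>" for \<xi>
  proof -
    have st: "sfom_state G x0 eta 2 gam th (xi(Suc k := \<xi>)) (Suc k) = sfom_state G x0 eta 2 gam th xi (Suc k)"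
      by (rule sfom_dep) auto
    have st0: "sfom_state G x0 eta 2 gam th (xi(Suc k := \<xi>)) k = sfom_state G x0 eta 2 gam th xi k"
      by (rule sfom_dep) auto
    have x1: "X (xi(Suc k := \<xi>)) (Suc k) = xk1" using st unfolding X_def xk1_def sfom_x_def by simp
    have x0': "X (xi(Suc k := \<xi>)) k = xk" using st0 unfolding X_def xk_def sfom_x_def by simp
    have m0: "Mm (xi(Suc k := \<xi>)) k = mk" using st unfolding Mm_def mk_def sfom_m_def by simp
    have "Mm (xi(Suc k := \<xi>)) (Suc k) = (1 - s) *\<^sub>R mk + th k 1 *\<^sub>R G z1 \<xi> + th k 2 *\<^sub>R G z2 \<xi>"
      using sfom_m_Suc[of G x0 eta gam th "xi(Suc k := \<xi>)" k] x1 x0' m0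
      unfolding X_def Mm_def s_def z1_def z2_def a1_def a2_def by simp
    then have "Mm (xi(Suc k := \<xi>)) (Suc k) - gradf (X (xi(Suc k := \<xi>)) (Suc k))
       = c + th k 1 *\<^sub>R (G z1 \<xi> - gradf z1) + th k 2 *\<^sub>R (G z2 \<xi> - gradf z2)"
      unfolding x1 c_def B_def by (simp add: algebra_simps)
    then show ?thesis unfolding Q_def x1 by simp
  qed
  have EB: "integrable M Q \<and> integral\<^sup>L M Q \<le> (norm c)\<^sup>2 + 2 * ((th k 1)\<^sup>2 + (th k 2)\<^sup>2) * \<sigma>\<^sup>2"
    unfolding Q_def
    by (rule expect_bound) (use G_meas G_int G_unb G_var_int G_var in auto)
  have iP: "integrable M (\<lambda>\<xi>. f xk1 + p (Suc k) * Q \<xi>)" using EB by auto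
  have eP: "integral\<^sup>L M (\<lambda>\<xi>. f xk1 + p (Suc k) * Q \<xi>) = f xk1 + p (Suc k) * integral\<^sup>L M Q"
    using EB by (simp add: prob_space)
  have mk0: "mk \<noteq> 0" using m_nz unfolding mk_def Mm_def by auto
  have eta0: "eta k > 0" using eta_pos by auto
  have xk1e: "xk1 = xk - (eta k / norm mk) *\<^sub>R mk"
    unfolding xk1_def xk_def mk_def X_def Mm_def by (rule sfom_x_Suc)
  have nd: "norm (xk1 - xk) = eta k" using mk0 eta0 by (simp add: xk1e)
  have s0: "0 < s" "s < 1" using th_sum unfolding s_def by auto
  have g1: "0 < gam k 1" "gam k 1 < 1" using gam_range by auto
  have g2: "0 < gam k 2" "gam k 2 < 1" using gam_range by auto
  have p0: "p k > 0" and p1: "p (Suc k) > 0" using p_pos by auto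
  define e where "e = norm (mk - gradf xk)"
  define nb where "nb = norm B"
  define W where "W = (th k 1)\<^sup>2 / gam k 1 ^ 6 + (th k 2)\<^sup>2 / gam k 2 ^ 6 + 1"
  have F1: "f xk1 \<le> f xk - eta k * norm (gradf xk) + 2 * eta k * e + L1 / 2 * (eta k)\<^sup>2"
  proof -
    have "f (xk + (xk1 - xk)) \<le> f xk + gradf xk \<bullet> (xk1 - xk) + L1 / 2 * (norm (xk1 - xk))\<^sup>2"
      by (rule smooth_upper[OF grad A_lip])
    moreover have "gradf xk \<bullet> (xk1 - xk) = eta k * (- (gradf xk \<bullet> mk) / norm mk)"
      by (simp add: xk1e)
    moreover have "eta k * (- (gradf xk \<bullet> mk) / norm mk) \<le> eta k * (- norm (gradf xk) + 2 * e)"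
      using S2[OF mk0, of "gradf xk"] eta0 unfolding e_def by (intro mult_left_mono) auto
    ultimately show ?thesis using nd by (simp add: algebra_simps)
  qed
  have F2: "(norm c)\<^sup>2 \<le> (1 - s) * e\<^sup>2 + nb\<^sup>2 / s"
  proof -
    have "norm c \<le> (1 - s) * e + nb"
      unfolding c_def e_def nb_def using s0
      by (rule_tac order_trans[OF norm_triangle_ineq]) simp
    then have "(norm c)\<^sup>2 \<le> ((1 - s) * e + nb)\<^sup>2" by (intro power_mono) auto
    also have "\<dots> \<le> (1 - s) * e\<^sup>2 + nb\<^sup>2 / s"
      by (rule S1) (use s0 in \<open>auto simp: e_def nb_def\<close>)
    finally show ?thesis .
  qed
  have F3: "nb\<^sup>2 \<le> L3\<^sup>2 * eta k ^ 6 / 12 * W"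
  proof -
    have "nb\<^sup>2 \<le> L3\<^sup>2 * norm (xk1 - xk) ^ 6 / 12 * W"
      unfolding nb_def B_def W_def z1_def z2_def a1_def a2_def s_def
      by (rule B_bound[OF D2 D3 B_lip]) (use g1 g2 th_sum cond1 cond2 L3 in auto)
    then show ?thesis using nd by simp
  qed
  have F4: "p (Suc k) * (1 - s) \<le> (1 - s / 2) * p k"
    using p_rec[rule_format, of k] unfolding s_def by (simp add: algebra_simps)
  have F5: "2 * eta k * e \<le> s / 2 * p k * e\<^sup>2 + 2 * (eta k)\<^sup>2 / (s * p k)"
    by (rule S3) (use s0 p0 in auto)
  have F6: "p (Suc k) * ((1 - s) * e\<^sup>2) \<le> (1 - s / 2) * p k * e\<^sup>2"
    using mult_right_mono[OF F4, of "e\<^sup>2"] by (simp add: algebra_simps)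
  have F7: "p (Suc k) * (nb\<^sup>2 / s) \<le> p (Suc k) * (L3\<^sup>2 * eta k ^ 6 / 12 * W) / s"
  proof -
    have "p (Suc k) * nb\<^sup>2 \<le> p (Suc k) * (L3\<^sup>2 * eta k ^ 6 / 12 * W)"
      by (rule mult_left_mono[OF F3]) (use p1 in auto)
    from divide_right_mono[OF this, of s] s0 show ?thesis by simp
  qed
  have F8: "p (Suc k) * (L3\<^sup>2 * eta k ^ 6 / 12 * W) / s =
      L3\<^sup>2 * eta k ^ 6 * (th k 1)\<^sup>2 * p (Suc k) / (12 * gam k 1 ^ 6 * s)
    + L3\<^sup>2 * eta k ^ 6 * (th k 2)\<^sup>2 * p (Suc k) / (12 * gam k 2 ^ 6 * s)
    + L3\<^sup>2 * eta k ^ 6 * p (Suc k) / (12 * s)"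
    unfolding W_def using g1 g2 s0 by (simp add: field_simps)
  have F9: "p (Suc k) * integral\<^sup>L M Q \<le> p (Suc k) * ((1 - s) * e\<^sup>2) + p (Suc k) * (nb\<^sup>2 / s)
      + 2 * ((th k 1)\<^sup>2 + (th k 2)\<^sup>2) * p (Suc k) * \<sigma>\<^sup>2"
  proof -
    have "integral\<^sup>L M Q \<le> (1 - s) * e\<^sup>2 + nb\<^sup>2 / s + 2 * ((th k 1)\<^sup>2 + (th k 2)\<^sup>2) * \<sigma>\<^sup>2"
      using EB F2 by linarith
    from mult_left_mono[OF this, of "p (Suc k)"] p1 show ?thesis by (simp add: algebra_simps)
  qed
  have main: "f xk1 + p (Suc k) * integral\<^sup>L M Q \<le> f xk + p k * e\<^sup>2 - eta k * norm (gradf xk) + L1 / 2 * (eta k)\<^sup>2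
           + 2 * (eta k)\<^sup>2 / (s * p k)
           + L3\<^sup>2 * eta k ^ 6 * (th k 1)\<^sup>2 * p (Suc k) / (12 * gam k 1 ^ 6 * s)
           + L3\<^sup>2 * eta k ^ 6 * (th k 2)\<^sup>2 * p (Suc k) / (12 * gam k 2 ^ 6 * s)
           + L3\<^sup>2 * eta k ^ 6 * p (Suc k) / (12 * s)
           + 2 * ((th k 1)\<^sup>2 + (th k 2)\<^sup>2) * p (Suc k) * \<sigma>\<^sup>2"
  proof -
    have "(1 - s / 2) * p k * e\<^sup>2 + s / 2 * p k * e\<^sup>2 = p k * e\<^sup>2" by (simp add: algebra_simps)
    then show ?thesis using F1 F5 F6 F7 F8 F9 by linarith
  qed
  show ?thesis
    unfolding Let_def X_def[symmetric] Mm_def[symmetric] s_def[symmetric] Pxi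
    using iP eP main unfolding xk_def[symmetric] mk_def[symmetric] e_def by simp
qed

end
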